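(* Let $\phi$ be a reduced Boolean formula in the variables $x_1,\dots,x_n$ defining a set $S \subseteq \{0,1\}^n$, and let $Q \subseteq [0,1]^n$ be any convex set containing $S$. If $Q$ satisfies all inequalities of notch at most $\nu$ that are valid for $S$, then $\phi(Q)$ satisfies all inequalities of notch at most $\nu+1$ that are valid for $S$. Moreover, if $Q$ is a polytope defined by an extended formulation of size $\sigma$, then $\phi(Q)$ is a polytope that can be defined by an extended formulation of size $|\phi|\sigma$.
   Context: Boolean formulas are built from input variables $x_1,\dots,x_n$ using $\wedge$, $\vee$, $\neg$, interpreted as functions $\{0,1\}^n\to\{0,1\}$; $\phi$ defines $S=\{x\in\{0,1\}^n:\phi(x)=1\}$. A formula is reduced if negations apply only to input variables. The size $|\phi|$ is the total number of occurrences of input variables. For a reduced $\phi$ and convex $Q\subseteq[0,1]^n$, $\phi(Q)$ is defined recursively: $x_i$ is replaced by $\{x \in Q : x_i = 1\}$; $\neg x_i$ by $\{x \in Q : x_i = 0\}$; a conjunction by the intersection of the corresponding sets; a disjunction by the convex hull of the union of the corresponding sets. An inequality in standard form is $\sum_{i \in I^+} c_i x_i + \sum_{i\in I^-} c_i(1-x_i) \ge \delta$ where $I^+,I^-$ partition $[n]$, $c \in \mathbb{R}^n_{\ge 0}$, $\delta\ge 0$ (every linear inequality can be written with such $I^\pm$, $c$, and the considered ones have $\delta \ge 0$). Its notch is the smallest number $\nu$ such that $\sum_{j\in J} c_j\ge\delta$ for every $J\subseteq[n]$ with $|J|\ge \nu$. An extended formulation of size $m$ of a polytope $P\subseteq\mathbb{R}^n$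 is a description $P=\{x:\exists y\in\mathbb{R}^d,\ Ay\ge b,\ x=Ty+t\}$ with $A$ having $m$ rows. *)

theory Defs
  imports "HOL-Analysis.Analysis"
begin

datatype 'n rformula =
    Var 'n
  | NegVar 'n
  | Conj "'n rformula" "'n rformula"
  | Disj "'n rformula" "'n rformula"

fun eval_rf :: "'n rformula \<Rightarrow> ('n \<Rightarrow> bool) \<Rightarrow> bool" where
  "eval_rf (Var i) a = a i"
| "eval_rf (NegVar i) a = (\<not> a i)"
| "eval_rf (Conj f g) a = (eval_rf f a \<and> eval_rf g a)"
| "eval_rf (Disj f g) a = (eval_rf f a \<or> eval_rf g a)"

fun rf_size :: "'n rformula \<Rightarrow> nat" where
  "rf_size (Var i) = 1"
| "rf_size (NegVar i) = 1"
| "rf_size (Conj f g) = rf_size f + rf_size g"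
| "rf_size (Disj f g) = rf_size f + rf_size g"

definition defined_set :: "'n::finite rformula \<Rightarrow> (real^'n) set" where
  "defined_set \<phi> = {x. (\<forall>i. x$i = 0 \<or> x$i = 1) \<and> eval_rf \<phi> (\<lambda>i. x$i = 1)}"

definition unit_cube :: "(real^'n::finite) set" where
  "unit_cube = {x. \<forall>i. 0 \<le> x$i \<and> x$i \<le> 1}"

fun rf_apply :: "'n::finite rformula \<Rightarrow> (real^'n) set \<Rightarrow> (real^'n) set" where
  "rf_apply (Var i) Q = {x \<in> Q. x$i = 1}"
| "rf_apply (NegVar i) Q = {x \<in> Q. x$i = 0}"
| "rf_apply (Conj f g) Q = rf_apply f Q \<inter> rf_apply g Q"
| "rf_apply (Disj f g) Q = convex hull (rf_apply f Q \<union> rf_apply g Q)"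

text \<open>An inequality in standard form is given by I+ (I- is its complement),
  a nonnegative coefficient vector c and a right-hand side delta >= 0.\<close>
definition std_form :: "real^'n::finite \<Rightarrow> real \<Rightarrow> bool" where
  "std_form c \<delta> \<longleftrightarrow> (\<forall>i. 0 \<le> c$i) \<and> 0 \<le> \<delta>"

definition std_ineq_holds :: "'n::finite set \<Rightarrow> real^'n \<Rightarrow> real \<Rightarrow> real^'n \<Rightarrow> bool" where
  "std_ineq_holds Ip c \<delta> x \<longleftrightarrow>
     (\<Sum>i\<in>Ip. c$i * x$i) + (\<Sum>i\<in>- Ip. c$i * (1 - x$i)) \<ge> \<delta>"

definition notch :: "real^'n::finite \<Rightarrow> real \<Rightarrow> nat" where
  "notch c \<delta> = (LEAST \<nu>. \<forall>J::'n set. \<nu> \<le> card J \<longrightarrow> \<delta> \<le> (\<Sum>j\<in>J. c$j))"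

definition sat_valid_notch :: "(real^'n::finite) set \<Rightarrow> nat \<Rightarrow> (real^'n) set \<Rightarrow> bool" where
  "sat_valid_notch S \<nu> Q \<longleftrightarrow>
     (\<forall>Ip c \<delta>. std_form c \<delta> \<and> notch c \<delta> \<le> \<nu> \<and> (\<forall>x\<in>S. std_ineq_holds Ip c \<delta> x)
        \<longrightarrow> (\<forall>x\<in>Q. std_ineq_holds Ip c \<delta> x))"

text \<open>Extended formulation of size m: P = {x. \<exists>y\<in>R^d. Ay \<ge> b, x = Ty + t},
  A an m x d matrix (vectors y in R^d as functions on {..<d}).\<close>
definition ext_form :: "(real^'n::finite) set \<Rightarrow> nat \<Rightarrow> bool" where
  "ext_form P m \<longleftrightarrow>
     (\<exists>(d::nat) (A::nat \<Rightarrow> nat \<Rightarrow> real) (b::nat \<Rightarrow> real) (T::'n \<Rightarrow> nat \<Rightarrow> real) (t::real^'n).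
        P = {x. \<exists>y::nat \<Rightarrow> real.
                  (\<forall>i<m. (\<Sum>j<d. A i j * y j) \<ge> b i) \<and>
                  (\<forall>k. x$k = (\<Sum>j<d. T k j * y j) + t$k)})"

end

theory Submission
  imports Defs
begin


definition tmv :: "'n::finite set \<Rightarrow> real^'n \<Rightarrow> real^'n \<Rightarrow> 'n \<Rightarrow> real" where
  "tmv Ip c x j = (if j \<in> Ip then c$j * x$j else c$j * (1 - x$j))"

lemma std_ineq_alt:
  "std_ineq_holds Ip c \<delta> x \<longleftrightarrow> \<delta> \<le> (\<Sum>j\<in>UNIV. tmv Ip c x j)"
proof -
  have "(\<Sum>j\<in>UNIV. tmv Ip c x j) = (\<Sum>i\<in>Ip. c$i * x$i) + (\<Sum>i\<in>- Ip. c$i * (1 - x$i))"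
    unfolding tmv_def by (subst sum.If_cases) auto
  then show ?thesis unfolding std_ineq_holds_def by simp
qed

lemma rf_apply_sub_convex:
  fixes Q :: "(real^'n::finite) set"
  assumes "convex Q"
  shows "rf_apply \<psi> Q \<subseteq> Q \<and> convex (rf_apply \<psi> Q)"
proof (induction \<psi>)
  case (Var i)
  have "convex {x::real^'n. x$i = 1}"
    unfolding convex_def by (auto simp: algebra_simps)
  moreover have "{x\<in>Q. x$i = 1} = Q \<inter> {x. x$i = 1}" by auto
  ultimately show ?case using assms convex_Int by auto
next
  case (NegVar i)
  have "convex {x::real^'n. x$i = 0}"
    unfolding convex_def by auto
  moreover have "{x\<in>Q. x$i = 0} = Q \<inter> {x. x$i = 0}" by auto
  ultimately show ?case using assms convex_Int by auto
next
  case (Conj f g)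
  then show ?case by (auto intro: convex_Int)
next
  case (Disj f g)
  have "convex hull (rf_apply f Q \<union> rf_apply g Q) \<subseteq> Q" using Disj assms by (intro hull_minimal) auto
  then show ?case by simp
qed

lemma notch_ex: "\<exists>\<nu>. \<forall>J::'n::finite set. \<nu> \<le> card J \<longrightarrow> \<delta> \<le> (\<Sum>j\<in>J. c$j)"
proof (intro exI allI impI)
  fix J :: "'n set"
  assume "Suc CARD('n) \<le> card J"
  moreover have "card J \<le> CARD('n)" by (rule card_mono) auto
  ultimately show "\<delta> \<le> (\<Sum>j\<in>J. c$j)" by simp
qed

lemma notch_prop:
  fixes c :: "real^'n::finite"
  assumes "notch c \<delta> \<le> k" "k \<le> card J"
  shows "\<delta> \<le> (\<Sum>j\<in>J. c$j)"
proof -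
  have "\<forall>J::'n set. notch c \<delta> \<le> card J \<longrightarrow> \<delta> \<le> (\<Sum>j\<in>J. c$j)"
    unfolding notch_def using LeastI_ex[OF notch_ex] by blast
  then show ?thesis using assms by auto
qed

lemma notch_le:
  assumes "\<And>J::'n::finite set. k \<le> card J \<Longrightarrow> \<delta> \<le> (\<Sum>j\<in>J. c$j)"
  shows "notch c \<delta> \<le> k"
  unfolding notch_def by (rule Least_le) (use assms in auto)

definition aval :: "'n set \<Rightarrow> real^'n \<Rightarrow> 'n \<Rightarrow> real" where
  "aval Ip x i = (if i \<in> Ip then x$i else 1 - x$i)"

lemma tmv_aval: "tmv Ip c x j = c$j * aval Ip x j"
  unfolding tmv_def aval_def by simp

lemma sum_tmv_split:
  "(\<Sum>j\<in>UNIV. tmv Ip c x j) = tmv Ip c x i + (\<Sum>j\<in>UNIV - {i}. tmv Ip c x j)"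
  by (simp add: sum.remove)

definition flipI :: "'n set \<Rightarrow> 'n \<Rightarrow> 'n set" where
  "flipI Ip i = (if i \<in> Ip then Ip - {i} else insert i Ip)"

lemma aval_flip_same: "aval (flipI Ip i) x i = 1 - aval Ip x i"
  unfolding aval_def flipI_def by auto

lemma aval_flip_other: "j \<noteq> i \<Longrightarrow> aval (flipI Ip i) x j = aval Ip x j"
  unfolding aval_def flipI_def by auto

lemma leaf_lemma:
  fixes Q S :: "(real^'n::finite) set"
  assumes std: "std_form c \<delta>" and nt: "notch c \<delta> \<le> \<nu> + 1"
    and valid: "\<forall>s\<in>S. std_ineq_holds Ip c \<delta> s"
    and S01: "\<forall>s\<in>S. \<forall>j. s$j = 0 \<or> s$j = 1"
    and sat: "sat_valid_notch S \<nu> Q"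
    and cube: "Q \<subseteq> unit_cube"
    and xQ: "x \<in> Q" and ai: "aval Ip x i = 1"
  shows "std_ineq_holds Ip c \<delta> x"
proof -
  have c0: "\<And>j. 0 \<le> c$j" and d0: "0 \<le> \<delta>" using std unfolding std_form_def by auto
  have xc: "\<And>j. 0 \<le> aval Ip x j" using xQ cube unfolding unit_cube_def aval_def by force
  define rest where "rest y = (\<Sum>j\<in>UNIV - {i}. tmv Ip c y j)" for y
  have rest0: "0 \<le> rest x" unfolding rest_def tmv_aval using c0 xc by (auto intro!: sum_nonneg)
  have orig: "\<And>y. (\<Sum>j\<in>UNIV. tmv Ip c y j) = c$i * aval Ip y i + rest y"
    unfolding rest_def using sum_tmv_split tmv_aval by metis
  show ?thesis
  proof (cases "\<delta> \<le> c$i")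
    case True
    then show ?thesis unfolding std_ineq_alt orig[of x] using ai rest0 by simp
  next
    case False
    define c' where "c' = (\<chi> j. if j = i then \<delta> else c$j)"
    define Ip' where "Ip' = flipI Ip i"
    have rest': "\<And>y. (\<Sum>j\<in>UNIV - {i}. tmv Ip' c' y j) = rest y"
      unfolding rest_def Ip'_def
      by (rule sum.cong) (auto simp: tmv_aval c'_def aval_flip_other)
    have new: "\<And>y. (\<Sum>j\<in>UNIV. tmv Ip' c' y j) = \<delta> * (1 - aval Ip y i) + rest y"
      using sum_tmv_split[of Ip' c' _ i] rest' unfolding Ip'_def
      by (simp add: tmv_aval c'_def aval_flip_same)
    have std': "std_form c' (\<delta> - c$i)" using c0 d0 False unfolding std_form_def c'_def by auto
    have nt': "notch c' (\<delta> - c$i) \<le> \<nu>"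
    proof (rule notch_le)
      fix J :: "'n set" assume J: "\<nu> \<le> card J"
      show "\<delta> - c $ i \<le> (\<Sum>j\<in>J. c' $ j)"
      proof (cases "i \<in> J")
        case True
        have "(\<Sum>j\<in>J. c' $ j) = c'$i + (\<Sum>j\<in>J - {i}. c' $ j)" using True by (simp add: sum.remove)
        moreover have "0 \<le> (\<Sum>j\<in>J - {i}. c' $ j)" using c0 d0 by (auto simp: c'_def intro!: sum_nonneg)
        ultimately show ?thesis using c0[of i] by (simp add: c'_def)
      next
        case False
        have "\<nu> + 1 \<le> card (insert i J)" using J False by simp
        then have "\<delta> \<le> (\<Sum>j\<in>insert i J. c $ j)" using notch_prop[OF nt] by blast
        also have "\<dots> = c$i + (\<Sum>j\<in>J. c $ j)" using False by simp
        also have "(\<Sum>j\<in>J. c $ j) = (\<Sum>j\<in>J. c' $ j)" using False by (auto simp: c'_def intro!: sum.cong)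
        finally show ?thesis by simp
      qed
    qed
    have valid': "\<forall>s\<in>S. std_ineq_holds Ip' c' (\<delta> - c$i) s"
    proof
      fix s assume s: "s \<in> S"
      have v: "\<delta> \<le> c$i * aval Ip s i + rest s" using valid s unfolding std_ineq_alt orig by blast
      have "aval Ip s i = 0 \<or> aval Ip s i = 1" using S01 s unfolding aval_def by force
      then show "std_ineq_holds Ip' c' (\<delta> - c$i) s"
        unfolding std_ineq_alt new using v c0[of i] d0 by auto
    qed
    have "std_ineq_holds Ip' c' (\<delta> - c$i) x"
      using sat std' nt' valid' xQ unfolding sat_valid_notch_def by blast
    then show ?thesis unfolding std_ineq_alt new orig using ai by simp
  qed
qed
lemma convex_std_ineq: "convex {x. std_ineq_holds Ip c \<delta> x}"
proof -
  have lin: "tmv Ip c (u *\<^sub>R x + v *\<^sub>R y) j = u * tmv Ip c x j + v * tmv Ip c y j"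
    if "u + v = 1" for u v :: real and x y j
  proof -
    have "c$j = u * c$j + v * c$j" using that by (metis distrib_right mult_1)
    then show ?thesis unfolding tmv_def by (auto simp: algebra_simps)
  qed
  show ?thesis
    unfolding std_ineq_alt
  proof (rule convexI)
    fix x y :: "real^'a" and u v :: real
    assume h0: "x \<in> {x. \<delta> \<le> sum (tmv Ip c x) UNIV}" "y \<in> {x. \<delta> \<le> sum (tmv Ip c x) UNIV}"
      and h1: "0 \<le> u" "0 \<le> v" "u + v = 1"
    have h: "\<delta> \<le> sum (tmv Ip c x) UNIV" "\<delta> \<le> sum (tmv Ip c y) UNIV" "0 \<le> u" "0 \<le> v" "u + v = 1"
      using h0 h1 by auto
    have "sum (tmv Ip c (u *\<^sub>R x + v *\<^sub>R y)) UNIV = u * sum (tmv Ip c x) UNIV + v * sum (tmv Ip c y) UNIV"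
      using lin[OF h(5)] by (simp add: sum.distrib sum_distrib_left)
    moreover have "u * \<delta> \<le> u * sum (tmv Ip c x) UNIV" "v * \<delta> \<le> v * sum (tmv Ip c y) UNIV"
      using h by (auto intro: mult_left_mono)
    ultimately have "\<delta> \<le> sum (tmv Ip c (u *\<^sub>R x + v *\<^sub>R y)) UNIV"
      using h(5) by (metis add_mono distrib_right mult_1)
    then show "u *\<^sub>R x + v *\<^sub>R y \<in> {x. \<delta> \<le> sum (tmv Ip c x) UNIV}" by simp
  qed
qed

lemma false_part:
  fixes Q S :: "(real^'n::finite) set"
  assumes std: "std_form c \<delta>" and nt: "notch c \<delta> \<le> \<nu> + 1"
    and valid: "\<forall>s\<in>S. std_ineq_holds Ip c \<delta> s"
    and S01: "\<forall>s\<in>S. \<forall>j. s$j = 0 \<or> s$j = 1"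
    and sat: "sat_valid_notch S \<nu> Q"
    and cube: "Q \<subseteq> unit_cube"
  shows "\<not> eval_rf \<psi> (\<lambda>j. j \<notin> Ip) \<Longrightarrow> x \<in> rf_apply \<psi> Q \<Longrightarrow> std_ineq_holds Ip c \<delta> x"
proof (induction \<psi> arbitrary: x)
  case (Var i)
  then show ?case using leaf_lemma[OF std nt valid S01 sat cube, of x i] by (auto simp: aval_def)
next
  case (NegVar i)
  then show ?case using leaf_lemma[OF std nt valid S01 sat cube, of x i] by (auto simp: aval_def)
next
  case (Conj f g)
  then show ?case by auto
next
  case (Disj f g)
  have "convex hull (rf_apply f Q \<union> rf_apply g Q) \<subseteq> {x. std_ineq_holds Ip c \<delta> x}"
    using Disj by (intro hull_minimal convex_std_ineq) auto
  then show ?case using Disj by auto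
qed

lemma part1:
  fixes \<phi> :: "'n::finite rformula" and Q :: "(real^'n) set"
  assumes "convex Q" and cube: "Q \<subseteq> unit_cube"
    and sat: "sat_valid_notch (defined_set \<phi>) \<nu> Q"
  shows "sat_valid_notch (defined_set \<phi>) (\<nu> + 1) (rf_apply \<phi> Q)"
  unfolding sat_valid_notch_def
proof (intro allI impI ballI, elim conjE)
  fix Ip c \<delta> x
  assume std: "std_form c \<delta>" and nt: "notch c \<delta> \<le> \<nu> + 1"
    and valid: "\<forall>s\<in>defined_set \<phi>. std_ineq_holds Ip c \<delta> s" and x: "x \<in> rf_apply \<phi> Q"
  have xQ: "x \<in> Q" using rf_apply_sub_convex[OF assms(1)] x by blast
  have S01: "\<forall>s\<in>defined_set \<phi>. \<forall>j. s$j = 0 \<or> s$j = 1" unfolding defined_set_def by auto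
  have c0: "\<And>j. 0 \<le> c$j" and d0: "0 \<le> \<delta>" using std unfolding std_form_def by auto
  show "std_ineq_holds Ip c \<delta> x"
  proof (cases "\<delta> = 0")
    case True
    have "0 \<le> sum (tmv Ip c x) UNIV" using xQ cube c0
      unfolding tmv_def unit_cube_def by (force intro!: sum_nonneg)
    then show ?thesis using True unfolding std_ineq_alt by simp
  next
    case False
    define p :: "real^'n" where "p = (\<chi> j. if j \<in> Ip then 0 else 1)"
    have "sum (tmv Ip c p) UNIV = 0" unfolding tmv_def p_def by (intro sum.neutral) auto
    then have "\<not> std_ineq_holds Ip c \<delta> p" using False d0 unfolding std_ineq_alt by simp
    then have "p \<notin> defined_set \<phi>" using valid by blast
    moreover have "\<forall>j. p$j = 0 \<or> p$j = 1" unfolding p_def by simp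
    ultimately have "\<not> eval_rf \<phi> (\<lambda>j. p$j = 1)" unfolding defined_set_def by blast
    moreover have "(\<lambda>j. p$j = (1::real)) = (\<lambda>j. j \<notin> Ip)" unfolding p_def by auto
    ultimately have "\<not> eval_rf \<phi> (\<lambda>j. j \<notin> Ip)" by simp
    then show ?thesis using false_part[OF std nt valid S01 sat cube] x by blast
  qed
qed


definition lf :: "nat \<Rightarrow> (nat \<Rightarrow> real) \<Rightarrow> (nat \<Rightarrow> real) \<Rightarrow> real" where
  "lf D a y = (\<Sum>j<D. a j * y j)"

definition rep :: "nat \<Rightarrow> nat \<Rightarrow> (nat \<Rightarrow> nat \<Rightarrow> real) \<Rightarrow> (nat \<Rightarrow> real)
   \<Rightarrow> ((nat \<Rightarrow> real) \<times> real) set \<Rightarrow> ('n \<Rightarrow> nat \<Rightarrow> real) \<Rightarrow> real^'n::finite \<Rightarrow> (real^'n) set" where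
  "rep m D A b E T t = {x. \<exists>y. (\<forall>i<m. b i \<le> lf D (A i) y) \<and> (\<forall>(a,f)\<in>E. lf D a y = f)
                             \<and> (\<forall>k. x$k = lf D (T k) y + t$k)}"

lemma rep_empty_ext: "P = rep m D A b {} T t \<Longrightarrow> ext_form P m"
  unfolding ext_form_def rep_def lf_def by blast

definition sub :: "nat \<Rightarrow> (nat \<Rightarrow> real) \<Rightarrow> real \<Rightarrow> nat \<Rightarrow> (nat \<Rightarrow> real) \<Rightarrow> (nat \<Rightarrow> real)" where
  "sub D a0 f0 j0 y = y(j0 := (f0 - (\<Sum>j\<in>{..<D} - {j0}. a0 j * y j)) / a0 j0)"

definition tr :: "(nat \<Rightarrow> real) \<Rightarrow> nat \<Rightarrow> (nat \<Rightarrow> real) \<Rightarrow> (nat \<Rightarrow> real)" where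
  "tr a0 j0 a = (\<lambda>j. if j = j0 then 0 else a j - a j0 * a0 j / a0 j0)"

definition cst :: "(nat \<Rightarrow> real) \<Rightarrow> real \<Rightarrow> nat \<Rightarrow> (nat \<Rightarrow> real) \<Rightarrow> real" where
  "cst a0 f0 j0 a = a j0 * f0 / a0 j0"

lemma lf_split: "j0 < D \<Longrightarrow> lf D a y = a j0 * y j0 + (\<Sum>j\<in>{..<D} - {j0}. a j * y j)"
  unfolding lf_def by (simp add: sum.remove)

lemma lf_sub:
  assumes "j0 < D" "a0 j0 \<noteq> 0"
  shows "lf D a (sub D a0 f0 j0 y) = lf D (tr a0 j0 a) y + cst a0 f0 j0 a"
proof -
  have s1: "(\<Sum>j\<in>{..<D} - {j0}. a j * sub D a0 f0 j0 y j) = (\<Sum>j\<in>{..<D} - {j0}. a j * y j)"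
    unfolding sub_def by (rule sum.cong) auto
  have s2: "lf D (tr a0 j0 a) y = (\<Sum>j\<in>{..<D} - {j0}. (a j - a j0 * a0 j / a0 j0) * y j)"
  proof -
    have "lf D (tr a0 j0 a) y = tr a0 j0 a j0 * y j0 + (\<Sum>j\<in>{..<D} - {j0}. tr a0 j0 a j * y j)"
      by (rule lf_split[OF assms(1)])
    also have "\<dots> = (\<Sum>j\<in>{..<D} - {j0}. tr a0 j0 a j * y j)" by (simp add: tr_def)
    also have "\<dots> = (\<Sum>j\<in>{..<D} - {j0}. (a j - a j0 * a0 j / a0 j0) * y j)"
      by (rule sum.cong) (auto simp: tr_def)
    finally show ?thesis .
  qed
  have s3: "(\<Sum>j\<in>{..<D} - {j0}. (a j - a j0 * a0 j / a0 j0) * y j) =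
      (\<Sum>j\<in>{..<D} - {j0}. a j * y j) - a j0 / a0 j0 * (\<Sum>j\<in>{..<D} - {j0}. a0 j * y j)"
    by (simp add: sum_subtractf sum_distrib_left algebra_simps)
  have "lf D a (sub D a0 f0 j0 y) = a j0 * ((f0 - (\<Sum>j\<in>{..<D} - {j0}. a0 j * y j)) / a0 j0)
          + (\<Sum>j\<in>{..<D} - {j0}. a j * y j)"
    using lf_split[OF assms(1), of a "sub D a0 f0 j0 y"] s1 by (simp add: sub_def)
  also have "\<dots> = lf D (tr a0 j0 a) y + cst a0 f0 j0 a"
    unfolding s2 s3 cst_def using assms(2) by (simp add: field_simps)
  finally show ?thesis .
qed

lemma lf_sub_eq:
  assumes "j0 < D" "a0 j0 \<noteq> 0"
  shows "lf D a0 (sub D a0 f0 j0 y) = f0"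
proof -
  have "tr a0 j0 a0 = (\<lambda>j. 0)" using assms(2) by (auto simp: tr_def)
  then show ?thesis using lf_sub[of j0 D a0 a0 f0 y, OF assms] assms(2) unfolding cst_def lf_def by simp
qed

lemma sub_id:
  assumes "j0 < D" "a0 j0 \<noteq> 0" "lf D a0 y = f0"
  shows "sub D a0 f0 j0 y = y"
proof -
  have "f0 = a0 j0 * y j0 + (\<Sum>j\<in>{..<D} - {j0}. a0 j * y j)" using lf_split[OF assms(1)] assms(3) by simp
  then have "(f0 - (\<Sum>j\<in>{..<D} - {j0}. a0 j * y j)) / a0 j0 = y j0" using assms(2) by simp
  then show ?thesis unfolding sub_def by auto
qed

lemma exI6:
  "finite E' \<Longrightarrow> card E' \<le> card E \<Longrightarrow> X = rep m D' A' b' E' T' t' \<Longrightarrow>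
   \<exists>D' A' b' E' T' t'. finite E' \<and> card E' \<le> card E \<and> X = rep m D' A' b' E' T' t'"
  by blast

lemma elim_one:
  fixes T :: "'n::finite \<Rightarrow> nat \<Rightarrow> real"
  assumes "1 \<le> m" and finE: "finite E"
  shows "\<exists>D' A' b' E' T' (t'::real^'n). finite E' \<and> card E' \<le> card E \<and>
           rep m D A b (insert (a0,f0) E) T t = rep m D' A' b' E' T' t'"
proof (cases "\<forall>j<D. a0 j = 0")
  case True
  then have z: "\<And>y. lf D a0 y = 0" unfolding lf_def by simp
  show ?thesis
  proof (cases "f0 = 0")
    case True
    have "rep m D A b (insert (a0,f0) E) T t = rep m D A b E T t" using z True unfolding rep_def by auto
    then show ?thesis by (intro exI6[OF finE]) auto
  next
    case False
    have "rep m D A b (insert (a0,f0) E) T t = {}" using z False unfolding rep_def by auto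
    moreover have "rep m D (\<lambda>i j. 0) (\<lambda>i. 1) {} T t = {}"
    proof -
      have l0: "lf D (\<lambda>j. 0) y = 0" for y unfolding lf_def by simp
      have m0: "0 < m" using assms by simp
      have "\<not> (\<forall>i<m. (1::real) \<le> lf D ((\<lambda>i j. 0) i) y)" for y using m0 l0 by auto
      then show ?thesis unfolding rep_def by blast
    qed
    ultimately show ?thesis by (intro exI6[of "{}"]) auto
  qed
next
  case False
  then obtain j0 where j0: "j0 < D" "a0 j0 \<noteq> 0" by auto
  define g where "g = (\<lambda>(a,f). (tr a0 j0 a, f - cst a0 f0 j0 a))"
  have "rep m D A b (insert (a0,f0) E) T t =
        rep m D (\<lambda>i. tr a0 j0 (A i)) (\<lambda>i. b i - cst a0 f0 j0 (A i)) (g ` E) (\<lambda>k. tr a0 j0 (T k))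
          (\<chi> k. t$k + cst a0 f0 j0 (T k))"
    (is "?L = ?R")
  proof
    show "?L \<subseteq> ?R"
    proof
      fix x assume "x \<in> ?L"
      then obtain y where y: "\<forall>i<m. b i \<le> lf D (A i) y" "\<forall>(a,f)\<in>insert (a0,f0) E. lf D a y = f"
        "\<forall>k. x$k = lf D (T k) y + t$k" unfolding rep_def by blast
      have sy: "sub D a0 f0 j0 y = y" using sub_id[of j0 D a0, OF j0] y(2) by auto
      have L: "lf D a y = lf D (tr a0 j0 a) y + cst a0 f0 j0 a" for a
      proof -
        have "lf D a (sub D a0 f0 j0 y) = lf D (tr a0 j0 a) y + cst a0 f0 j0 a"
          by (rule lf_sub[of j0 D a0, OF j0])
        then show ?thesis unfolding sy .
      qed
      have R1: "\<forall>i<m. b i - cst a0 f0 j0 (A i) \<le> lf D (tr a0 j0 (A i)) y"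
      proof (intro allI impI)
        fix i assume "i < m"
        then show "b i - cst a0 f0 j0 (A i) \<le> lf D (tr a0 j0 (A i)) y" using y(1)[rule_format, of i] L[of "A i"] by linarith
      qed
      have R2: "\<forall>(a,f)\<in>g ` E. lf D a y = f"
      proof
        fix p assume "p \<in> g ` E"
        then obtain a f where af: "(a,f) \<in> E" "p = g (a,f)" by auto
        then have "lf D a y = f" using y(2) by auto
        then have "lf D (tr a0 j0 a) y = f - cst a0 f0 j0 a" using L[of a] by simp
        then show "case p of (a,f) \<Rightarrow> lf D a y = f" unfolding af g_def by simp
      qed
      have R3: "\<forall>k. x$k = lf D (tr a0 j0 (T k)) y + (\<chi> k. t$k + cst a0 f0 j0 (T k))$k"
      proof
        fix k show "x$k = lf D (tr a0 j0 (T k)) y + (\<chi> k. t$k + cst a0 f0 j0 (T k))$k"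
          using y(3) L[of "T k"] by simp
      qed
      show "x \<in> ?R" unfolding rep_def using R1 R2 R3 by blast
    qed
  next
    show "?R \<subseteq> ?L"
    proof
      fix x assume "x \<in> ?R"
      then obtain y where y: "\<forall>i<m. b i - cst a0 f0 j0 (A i) \<le> lf D (tr a0 j0 (A i)) y"
        "\<forall>(a,f)\<in>g ` E. lf D a y = f"
        "\<forall>k. x$k = lf D (tr a0 j0 (T k)) y + (t$k + cst a0 f0 j0 (T k))" unfolding rep_def by auto
      define y' where "y' = sub D a0 f0 j0 y"
      have L: "\<And>a. lf D a y' = lf D (tr a0 j0 a) y + cst a0 f0 j0 a"
        unfolding y'_def using lf_sub[of j0 D a0, OF j0] by simp
      have E: "\<forall>(a,f)\<in>E. lf D a y' = f"
      proof (clarify)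
        fix a f assume "(a,f) \<in> E"
        then have "lf D (tr a0 j0 a) y = f - cst a0 f0 j0 a" using y(2) unfolding g_def by force
        then show "lf D a y' = f" using L[of a] by simp
      qed
      have R1: "\<forall>i<m. b i \<le> lf D (A i) y'"
      proof (intro allI impI)
        fix i assume "i < m"
        then show "b i \<le> lf D (A i) y'" using y(1)[rule_format, of i] L[of "A i"] by linarith
      qed
      have R2: "\<forall>(a,f)\<in>insert (a0,f0) E. lf D a y' = f"
        using E lf_sub_eq[of j0 D a0 f0 y, OF j0] unfolding y'_def[symmetric] by auto
      have R3: "\<forall>k. x$k = lf D (T k) y' + t$k"
      proof
        fix k show "x$k = lf D (T k) y' + t$k" using y(3) L[of "T k"] by simp
      qed
      show "x \<in> ?L" unfolding rep_def using R1 R2 R3 by blast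
    qed
  qed
  moreover have "finite (g ` E) \<and> card (g ` E) \<le> card E" using card_image_le finE by blast
  ultimately show ?thesis by (intro exI6) auto
qed

lemma rep_ext:
  fixes T :: "'n::finite \<Rightarrow> nat \<Rightarrow> real"
  assumes m: "1 \<le> m" and "finite E" "P = rep m D A b E T t"
  shows "ext_form P m"
  using assms(2,3)
proof (induction "card E" arbitrary: D A b E T t rule: less_induct)
  case less
  show ?case
  proof (cases "E = {}")
    case True
    then show ?thesis using less rep_empty_ext by blast
  next
    case False
    then obtain a0 f0 where p: "(a0,f0) \<in> E" by auto
    let ?E = "E - {(a0,f0)}"
    have EE: "E = insert (a0,f0) ?E" using p by auto
    have fE: "finite ?E" using less by simp
    obtain D' A' b' E' T' t' where e: "finite E'" "card E' \<le> card ?E"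
      and eq: "rep m D A b (insert (a0,f0) ?E) T t = rep m D' A' b' E' T' t'"
      using elim_one[OF m fE, of D A b a0 f0 T t] by blast
    have "card ?E < card E" using less(2) p by (rule card_Diff1_less)
    then have "card E' < card E" using e by simp
    moreover have "P = rep m D' A' b' E' T' t'" using less(3) eq EE by simp
    ultimately show ?thesis using less(1) e(1) by blast
  qed
qed

lemma lf_add: "lf D (\<lambda>j. a j + b j) y = lf D a y + lf D b y"
  unfolding lf_def by (simp add: sum.distrib algebra_simps)
lemma lf_diff: "lf D (\<lambda>j. a j - b j) y = lf D a y - lf D b y"
  unfolding lf_def by (simp add: sum_subtractf algebra_simps)
lemma lf_scale: "lf D (\<lambda>j. c * a j) y = c * lf D a y"
  unfolding lf_def by (simp add: sum_distrib_left algebra_simps)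
lemma lf_zero: "lf D (\<lambda>j. 0) y = 0"
  unfolding lf_def by simp
lemma lf_zero_y: "lf D a (\<lambda>j. 0) = 0"
  unfolding lf_def by simp

definition hsol :: "nat \<Rightarrow> nat \<Rightarrow> (nat \<Rightarrow> nat \<Rightarrow> real) \<Rightarrow> (nat \<Rightarrow> real) set \<Rightarrow> (nat \<Rightarrow> real) set" where
  "hsol m D A E = {y. (\<forall>i<m. 0 \<le> lf D (A i) y) \<and> (\<forall>a\<in>E. lf D a y = 0)}"

definition hmap :: "nat \<Rightarrow> ('n::finite \<Rightarrow> nat \<Rightarrow> real) \<Rightarrow> (nat \<Rightarrow> real) \<Rightarrow> (nat \<Rightarrow> real) \<Rightarrow> (real^'n) \<times> real" where
  "hmap D X L y = ((\<chi> k. lf D (X k) y), lf D L y)"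

definition hform :: "((real^'n::finite) \<times> real) set \<Rightarrow> nat \<Rightarrow> bool" where
  "hform K m \<longleftrightarrow> (\<exists>D A E X L. finite E \<and> K = hmap D X L ` hsol m D A E)"

lemma hform_ext:
  fixes K :: "((real^'n::finite) \<times> real) set"
  assumes "hform K m" "1 \<le> m"
  shows "ext_form {x. (x,1) \<in> K} m"
proof -
  obtain D A E X L where fE: "finite E" and K: "K = hmap D X L ` hsol m D A E"
    using assms(1) unfolding hform_def by blast
  have "{x. (x,1) \<in> K} = rep m D A (\<lambda>i. 0) ((\<lambda>a. (a,0)) ` E \<union> {(L,1)}) X 0"
    unfolding K rep_def hsol_def hmap_def by (auto simp: vec_eq_iff)
  moreover have "finite ((\<lambda>a. (a,0::real)) ` E \<union> {(L,1)})" using fE by simp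
  ultimately show ?thesis using rep_ext[OF assms(2)] by blast
qed

lemma hform_eq:
  fixes K :: "((real^'n::finite) \<times> real) set"
  assumes "hform K m"
  shows "hform (K \<inter> {p. fst p $ i = c * snd p}) m"
proof -
  obtain D A E X L where fE: "finite E" and K: "K = hmap D X L ` hsol m D A E"
    using assms(1) unfolding hform_def by blast
  define a where "a = (\<lambda>j. X i j - c * L j)"
  have la: "lf D a y = lf D (X i) y - c * lf D L y" for y
    unfolding a_def by (simp add: lf_diff lf_scale)
  have "K \<inter> {p. fst p $ i = c * snd p} = hmap D X L ` hsol m D A (insert a E)"
    unfolding K hsol_def hmap_def using la by auto
  moreover have "finite (insert a E)" using fE by simp
  ultimately show ?thesis unfolding hform_def by (intro exI conjI) 
qed

definition sh1 :: "nat \<Rightarrow> (nat \<Rightarrow> real) \<Rightarrow> nat \<Rightarrow> real" where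
  "sh1 D1 a = (\<lambda>j. if j < D1 then a j else 0)"
definition sh2 :: "nat \<Rightarrow> (nat \<Rightarrow> real) \<Rightarrow> nat \<Rightarrow> real" where
  "sh2 D1 a = (\<lambda>j. if D1 \<le> j then a (j - D1) else 0)"
definition glue :: "nat \<Rightarrow> (nat \<Rightarrow> real) \<Rightarrow> (nat \<Rightarrow> real) \<Rightarrow> nat \<Rightarrow> real" where
  "glue D1 y1 y2 = (\<lambda>j. if j < D1 then y1 j else y2 (j - D1))"
definition shy :: "nat \<Rightarrow> (nat \<Rightarrow> real) \<Rightarrow> nat \<Rightarrow> real" where
  "shy D1 y = (\<lambda>j. y (j + D1))"

lemma sum_split_add: "(\<Sum>j<D1+D2. f j) = (\<Sum>j<D1. f j) + (\<Sum>j<D2. f (j + D1::nat))"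
  by (induction D2) (auto simp: add.commute add.left_commute)

lemma lf_sh1: "lf (D1+D2) (sh1 D1 a) y = lf D1 a y"
  unfolding lf_def sh1_def sum_split_add by simp

lemma lf_sh2: "lf (D1+D2) (sh2 D1 a) y = lf D2 a (shy D1 y)"
  unfolding lf_def sh2_def sum_split_add shy_def by simp

lemma lf_glue1: "lf D1 a (glue D1 y1 y2) = lf D1 a y1"
  unfolding lf_def glue_def by (rule sum.cong) auto

lemma shy_glue: "shy D1 (glue D1 y1 y2) = y2"
  unfolding shy_def glue_def by auto

definition cA :: "nat \<Rightarrow> nat \<Rightarrow> (nat \<Rightarrow> nat \<Rightarrow> real) \<Rightarrow> (nat \<Rightarrow> nat \<Rightarrow> real) \<Rightarrow> nat \<Rightarrow> nat \<Rightarrow> real" where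
  "cA m1 D1 A1 A2 i = (if i < m1 then sh1 D1 (A1 i) else sh2 D1 (A2 (i - m1)))"

lemma rows_comb:
  "(\<forall>i<m1+m2. 0 \<le> lf (D1+D2) (cA m1 D1 A1 A2 i) y) \<longleftrightarrow>
   (\<forall>i<m1. 0 \<le> lf D1 (A1 i) y) \<and> (\<forall>i<m2. 0 \<le> lf D2 (A2 i) (shy D1 y))"
proof
  assume h: "\<forall>i<m1+m2. 0 \<le> lf (D1+D2) (cA m1 D1 A1 A2 i) y"
  have 1: "\<forall>i<m1. 0 \<le> lf D1 (A1 i) y"
  proof (intro allI impI)
    fix i assume "i < m1" then show "0 \<le> lf D1 (A1 i) y" using h[rule_format, of i] by (simp add: cA_def lf_sh1)
  qed
  have 2: "\<forall>i<m2. 0 \<le> lf D2 (A2 i) (shy D1 y)"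
  proof (intro allI impI)
    fix i assume "i < m2" then show "0 \<le> lf D2 (A2 i) (shy D1 y)" using h[rule_format, of "i + m1"] by (simp add: cA_def lf_sh2)
  qed
  show "(\<forall>i<m1. 0 \<le> lf D1 (A1 i) y) \<and> (\<forall>i<m2. 0 \<le> lf D2 (A2 i) (shy D1 y))" using 1 2 by blast
next
  assume h: "(\<forall>i<m1. 0 \<le> lf D1 (A1 i) y) \<and> (\<forall>i<m2. 0 \<le> lf D2 (A2 i) (shy D1 y))"
  show "\<forall>i<m1+m2. 0 \<le> lf (D1+D2) (cA m1 D1 A1 A2 i) y"
  proof (intro allI impI)
    fix i assume i: "i < m1 + m2"
    show "0 \<le> lf (D1+D2) (cA m1 D1 A1 A2 i) y"
    proof (cases "i < m1")
      case True then show ?thesis using h by (simp add: cA_def lf_sh1)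
    next
      case False then show ?thesis using h i by (simp add: cA_def lf_sh2)
    qed
  qed
qed

lemma hsol_comb:
  "y \<in> hsol (m1+m2) (D1+D2) (cA m1 D1 A1 A2) (sh1 D1 ` E1 \<union> sh2 D1 ` E2 \<union> F) \<longleftrightarrow>
   y \<in> hsol m1 D1 A1 E1 \<and> shy D1 y \<in> hsol m2 D2 A2 E2 \<and> (\<forall>a\<in>F. lf (D1+D2) a y = 0)"
proof -
  have e: "(\<forall>a\<in>f ` A. P a) \<longleftrightarrow> (\<forall>x\<in>A. P (f x))" for f :: "(nat \<Rightarrow> real) \<Rightarrow> (nat \<Rightarrow> real)" and A P by auto
  show ?thesis unfolding hsol_def rows_comb ball_Un e by (auto simp: lf_sh1 lf_sh2)
qed

lemma hsol_glue1: "glue D1 y1 y2 \<in> hsol m1 D1 A1 E1 \<longleftrightarrow> y1 \<in> hsol m1 D1 A1 E1"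
  by (simp add: hsol_def lf_glue1)

definition msum :: "(('a::real_vector) \<times> real) set \<Rightarrow> ('a \<times> real) set \<Rightarrow> ('a \<times> real) set" where
  "msum K1 K2 = {(fst p + fst q, snd p + snd q) | p q. p \<in> K1 \<and> q \<in> K2}"

lemma hform_msum:
  fixes K1 K2 :: "((real^'n::finite) \<times> real) set"
  assumes "hform K1 m1" "hform K2 m2"
  shows "hform (msum K1 K2) (m1 + m2)"
proof -
  obtain D1 A1 E1 X1 L1 where f1: "finite E1" and K1: "K1 = hmap D1 X1 L1 ` hsol m1 D1 A1 E1"
    using assms(1) unfolding hform_def by blast
  obtain D2 A2 E2 X2 L2 where f2: "finite E2" and K2: "K2 = hmap D2 X2 L2 ` hsol m2 D2 A2 E2"
    using assms(2) unfolding hform_def by blast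
  define X where "X = (\<lambda>k j. sh1 D1 (X1 k) j + sh2 D1 (X2 k) j)"
  define L where "L = (\<lambda>j. sh1 D1 L1 j + sh2 D1 L2 j)"
  define E where "E = sh1 D1 ` E1 \<union> sh2 D1 ` E2 \<union> {}"
  have hm: "hmap (D1+D2) X L y = (fst (hmap D1 X1 L1 y) + fst (hmap D2 X2 L2 (shy D1 y)),
                                  snd (hmap D1 X1 L1 y) + snd (hmap D2 X2 L2 (shy D1 y)))" for y
    unfolding hmap_def X_def L_def by (simp add: lf_add lf_sh1 lf_sh2 vec_eq_iff)
  have "msum K1 K2 = hmap (D1+D2) X L ` hsol (m1+m2) (D1+D2) (cA m1 D1 A1 A2) E"
  proof
    show "msum K1 K2 \<subseteq> hmap (D1+D2) X L ` hsol (m1+m2) (D1+D2) (cA m1 D1 A1 A2) E"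
    proof
      fix z assume "z \<in> msum K1 K2"
      then obtain y1 y2 where y: "y1 \<in> hsol m1 D1 A1 E1" "y2 \<in> hsol m2 D2 A2 E2"
        and z: "z = (fst (hmap D1 X1 L1 y1) + fst (hmap D2 X2 L2 y2), snd (hmap D1 X1 L1 y1) + snd (hmap D2 X2 L2 y2))"
        unfolding msum_def K1 K2 by blast
      let ?y = "glue D1 y1 y2"
      have "?y \<in> hsol (m1+m2) (D1+D2) (cA m1 D1 A1 A2) E"
        unfolding E_def hsol_comb shy_glue hsol_glue1 using y by simp
      moreover have "hmap D1 X1 L1 ?y = hmap D1 X1 L1 y1" unfolding hmap_def lf_glue1 ..
      ultimately show "z \<in> hmap (D1+D2) X L ` hsol (m1+m2) (D1+D2) (cA m1 D1 A1 A2) E"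
        unfolding z using hm[of ?y] shy_glue[of D1 y1 y2] by (metis image_eqI)
    qed
  next
    show "hmap (D1+D2) X L ` hsol (m1+m2) (D1+D2) (cA m1 D1 A1 A2) E \<subseteq> msum K1 K2"
    proof
      fix z assume "z \<in> hmap (D1+D2) X L ` hsol (m1+m2) (D1+D2) (cA m1 D1 A1 A2) E"
      then obtain y where y: "y \<in> hsol (m1+m2) (D1+D2) (cA m1 D1 A1 A2) E" and z: "z = hmap (D1+D2) X L y"
        by blast
      have "y \<in> hsol m1 D1 A1 E1" "shy D1 y \<in> hsol m2 D2 A2 E2"
        using y unfolding E_def hsol_comb by auto
      then have "hmap D1 X1 L1 y \<in> K1" "hmap D2 X2 L2 (shy D1 y) \<in> K2" unfolding K1 K2 by auto
      then show "z \<in> msum K1 K2" unfolding z hm msum_def by blast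
    qed
  qed
  moreover have "finite E" unfolding E_def using f1 f2 by simp
  ultimately show ?thesis unfolding hform_def by (intro exI conjI)
qed

lemma hform_int:
  fixes K1 K2 :: "((real^'n::finite) \<times> real) set"
  assumes "hform K1 m1" "hform K2 m2"
  shows "hform (K1 \<inter> K2) (m1 + m2)"
proof -
  obtain D1 A1 E1 X1 L1 where f1: "finite E1" and K1: "K1 = hmap D1 X1 L1 ` hsol m1 D1 A1 E1"
    using assms(1) unfolding hform_def by blast
  obtain D2 A2 E2 X2 L2 where f2: "finite E2" and K2: "K2 = hmap D2 X2 L2 ` hsol m2 D2 A2 E2"
    using assms(2) unfolding hform_def by blast
  define X where "X = (\<lambda>k. sh1 D1 (X1 k))"
  define L where "L = sh1 D1 L1"
  define F where "F = range (\<lambda>k j. sh1 D1 (X1 k) j - sh2 D1 (X2 k) j) \<union> {(\<lambda>j. sh1 D1 L1 j - sh2 D1 L2 j)}"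
  define E where "E = sh1 D1 ` E1 \<union> sh2 D1 ` E2 \<union> F"
  have hm: "hmap (D1+D2) X L y = hmap D1 X1 L1 y" for y
    unfolding hmap_def X_def L_def by (simp add: lf_sh1)
  have Fiff: "(\<forall>a\<in>F. lf (D1+D2) a y = 0) \<longleftrightarrow> hmap D1 X1 L1 y = hmap D2 X2 L2 (shy D1 y)" for y
    unfolding F_def hmap_def by (auto simp: lf_diff lf_sh1 lf_sh2 vec_eq_iff)
  have "K1 \<inter> K2 = hmap (D1+D2) X L ` hsol (m1+m2) (D1+D2) (cA m1 D1 A1 A2) E"
  proof
    show "K1 \<inter> K2 \<subseteq> hmap (D1+D2) X L ` hsol (m1+m2) (D1+D2) (cA m1 D1 A1 A2) E"
    proof
      fix z assume "z \<in> K1 \<inter> K2"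
      then obtain y1 y2 where y: "y1 \<in> hsol m1 D1 A1 E1" "y2 \<in> hsol m2 D2 A2 E2"
        and z: "z = hmap D1 X1 L1 y1" "z = hmap D2 X2 L2 y2"
        unfolding K1 K2 by blast
      let ?y = "glue D1 y1 y2"
      have h1: "hmap D1 X1 L1 ?y = hmap D1 X1 L1 y1" unfolding hmap_def lf_glue1 ..
      have "?y \<in> hsol (m1+m2) (D1+D2) (cA m1 D1 A1 A2) E"
        unfolding E_def hsol_comb shy_glue hsol_glue1 Fiff h1 using y z by simp
      then show "z \<in> hmap (D1+D2) X L ` hsol (m1+m2) (D1+D2) (cA m1 D1 A1 A2) E"
        using hm[of ?y] h1 z(1) by (metis image_eqI)
    qed
  next
    show "hmap (D1+D2) X L ` hsol (m1+m2) (D1+D2) (cA m1 D1 A1 A2) E \<subseteq> K1 \<inter> K2"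
    proof
      fix z assume "z \<in> hmap (D1+D2) X L ` hsol (m1+m2) (D1+D2) (cA m1 D1 A1 A2) E"
      then obtain y where y: "y \<in> hsol (m1+m2) (D1+D2) (cA m1 D1 A1 A2) E" and z: "z = hmap (D1+D2) X L y"
        by blast
      have "y \<in> hsol m1 D1 A1 E1" "shy D1 y \<in> hsol m2 D2 A2 E2" "hmap D1 X1 L1 y = hmap D2 X2 L2 (shy D1 y)"
        using y unfolding E_def hsol_comb Fiff by auto
      then show "z \<in> K1 \<inter> K2" unfolding z hm K1 K2 by (metis IntI image_eqI)
    qed
  qed
  moreover have "finite E" unfolding E_def F_def using f1 f2 by simp
  ultimately show ?thesis unfolding hform_def by (intro exI conjI)
qed



definition cone_of :: "(real^'n::finite) set \<Rightarrow> ((real^'n) \<times> real) set" where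
  "cone_of F = {p. (snd p = 0 \<and> fst p = 0) \<or> (0 < snd p \<and> (1 / snd p) *\<^sub>R fst p \<in> F)}"

lemma cone_int: "cone_of (F \<inter> G) = cone_of F \<inter> cone_of G"
  unfolding cone_of_def by auto

lemma cone_lit: "cone_of {x\<in>Q. x$i = c} = cone_of Q \<inter> {p. fst p $ i = c * snd p}"
  unfolding cone_of_def by (auto simp: field_simps)

lemma cone_root: "{x. (x,1) \<in> cone_of F} = F"
  unfolding cone_of_def by simp

lemma cone_mono: "F \<subseteq> G \<Longrightarrow> cone_of F \<subseteq> cone_of G"
  unfolding cone_of_def by auto

lemma zero_cone: "(0, 0) \<in> cone_of F"
  unfolding cone_of_def by simp

lemma cone_disj:
  fixes F G :: "(real^'n::finite) set"
  assumes cF: "convex F" and cG: "convex G"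
  shows "cone_of (convex hull (F \<union> G)) = msum (cone_of F) (cone_of G)"
proof
  show "cone_of (convex hull (F \<union> G)) \<subseteq> msum (cone_of F) (cone_of G)"
  proof
    fix p assume p: "p \<in> cone_of (convex hull (F \<union> G))"
    obtain X \<Lambda> where pX: "p = (X, \<Lambda>)" by force
    show "p \<in> msum (cone_of F) (cone_of G)"
    proof (cases "\<Lambda> = 0 \<and> X = 0")
      case True
      then show ?thesis unfolding msum_def pX using zero_cone by force
    next
      case False
      then have L: "0 < \<Lambda>" and z: "(1/\<Lambda>) *\<^sub>R X \<in> convex hull (F \<union> G)"
        using p unfolding pX cone_of_def by auto
      have XX: "X = \<Lambda> *\<^sub>R ((1/\<Lambda>) *\<^sub>R X)" using L by simp
      show ?thesis
      proof (cases "F = {}")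
        case True
        then have "(X, \<Lambda>) \<in> cone_of G" using z L cG convex_hull_eq[of G] unfolding cone_of_def by auto
        then show ?thesis unfolding msum_def pX using zero_cone[of F] by force
      next
        case Fne: False
        show ?thesis
        proof (cases "G = {}")
          case True
          then have "(X, \<Lambda>) \<in> cone_of F" using z L cF convex_hull_eq[of F] unfolding cone_of_def by auto
          then show ?thesis unfolding msum_def pX using zero_cone[of G] by force
        next
          case Gne: False
          obtain u v s t where uv: "0 \<le> u" "0 \<le> v" "u + v = 1" "s \<in> F" "t \<in> G"
            and zz: "(1/\<Lambda>) *\<^sub>R X = u *\<^sub>R s + v *\<^sub>R t"
            using z convex_hull_union_two[OF cF Fne cG Gne] by blast
          have p1: "((\<Lambda> * u) *\<^sub>R s, \<Lambda> * u) \<in> cone_of F"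
          proof (cases "u = 0")
            case True then show ?thesis using zero_cone by simp
          next
            case False then have "0 < \<Lambda> * u" using L uv by simp
            then show ?thesis unfolding cone_of_def using uv by simp
          qed
          have q1: "((\<Lambda> * v) *\<^sub>R t, \<Lambda> * v) \<in> cone_of G"
          proof (cases "v = 0")
            case True then show ?thesis using zero_cone by simp
          next
            case False then have "0 < \<Lambda> * v" using L uv by simp
            then show ?thesis unfolding cone_of_def using uv by simp
          qed
          have "X = (\<Lambda> * u) *\<^sub>R s + (\<Lambda> * v) *\<^sub>R t" using XX zz by (simp add: scaleR_add_right)
          moreover have "\<Lambda> = \<Lambda> * u + \<Lambda> * v" using uv by (simp add: distrib_left[symmetric])
          ultimately show ?thesis unfolding msum_def pX using p1 q1 by force
        qed
      qed
    qed
  qed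
next
  show "msum (cone_of F) (cone_of G) \<subseteq> cone_of (convex hull (F \<union> G))"
  proof
    fix p assume "p \<in> msum (cone_of F) (cone_of G)"
    then obtain X1 L1 X2 L2 where p1: "(X1,L1) \<in> cone_of F" and q1: "(X2,L2) \<in> cone_of G"
      and p: "p = (X1 + X2, L1 + L2)" unfolding msum_def by force
    have sub: "F \<subseteq> convex hull (F \<union> G)" "G \<subseteq> convex hull (F \<union> G)"
      by (auto intro: hull_inc)
    show "p \<in> cone_of (convex hull (F \<union> G))"
    proof (cases "L1 = 0 \<and> X1 = 0")
      case True
      then show ?thesis using q1 cone_mono[OF sub(2)] p by auto
    next
      case F1: False
      show ?thesis
      proof (cases "L2 = 0 \<and> X2 = 0")
        case True
        then show ?thesis using p1 cone_mono[OF sub(1)] p by auto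
      next
        case False
        then have l2: "0 < L2" and b: "(1/L2) *\<^sub>R X2 \<in> G" using q1 unfolding cone_of_def by auto
        have l1: "0 < L1" and a: "(1/L1) *\<^sub>R X1 \<in> F" using p1 F1 unfolding cone_of_def by auto
        have "(L1/(L1+L2)) *\<^sub>R ((1/L1) *\<^sub>R X1) + (L2/(L1+L2)) *\<^sub>R ((1/L2) *\<^sub>R X2) \<in> convex hull (F \<union> G)"
          using a b sub l1 l2
          by (intro convexD[OF convex_convex_hull]) (auto simp: add_divide_distrib[symmetric])
        moreover have "(L1/(L1+L2)) *\<^sub>R ((1/L1) *\<^sub>R X1) + (L2/(L1+L2)) *\<^sub>R ((1/L2) *\<^sub>R X2)
                       = (1/(L1+L2)) *\<^sub>R (X1 + X2)"
          using l1 l2 by (simp add: scaleR_add_right)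
        ultimately show ?thesis unfolding p cone_of_def using l1 l2 by simp
      qed
    qed
  qed
qed



lemma bounded_ray:
  fixes a r :: real
  assumes "\<forall>s\<ge>0. 0 \<le> a + s*r \<and> a + s*r \<le> 1"
  shows "r = 0"
proof (rule ccontr)
  assume "r \<noteq> 0"
  have a: "0 \<le> a" "a \<le> 1" using assms[rule_format, of 0] by auto
  show False
  proof (cases "r > 0")
    case True
    then show False using assms[rule_format, of "2/r"] a by simp
  next
    case False
    then have "r < 0" using \<open>r \<noteq> 0\<close> by simp
    then show False using assms[rule_format, of "-2/r"] a by (simp add: field_simps)
  qed
qed

definition ext :: "nat \<Rightarrow> (nat \<Rightarrow> real) \<Rightarrow> real \<Rightarrow> nat \<Rightarrow> real" where
  "ext d a c = (\<lambda>j. if j < d then a j else if j = d then c else 0)"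

lemma lf_ext: "lf (Suc d) (ext d a c) y = lf d a y + c * y d"
  unfolding lf_def ext_def by simp

lemma lf_lin: "lf d a (\<lambda>j. u j + s * r j) = lf d a u + s * lf d a r"
  unfolding lf_def by (simp add: sum.distrib sum_distrib_left algebra_simps)

lemma lf_div: "lf d a (\<lambda>j. y j / l) = lf d a y / l"
  unfolding lf_def by (simp add: sum_divide_distrib)

lemma lf_mul: "lf d a (\<lambda>j. l * y j) = l * lf d a y"
  unfolding lf_def by (simp add: sum_distrib_left algebra_simps)

lemma lf_cong: "(\<And>j. j < d \<Longrightarrow> y j = z j) \<Longrightarrow> lf d a y = lf d a z"
  unfolding lf_def by (rule sum.cong) auto

lemma leaf_cone:
  fixes Q :: "(real^'n::finite) set"
  assumes ef: "ext_form Q \<sigma>" and cube: "Q \<subseteq> unit_cube"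
    and q: "q1 \<in> Q" "q2 \<in> Q" "q1 \<noteq> q2"
  shows "hform (cone_of Q) \<sigma>"
proof -
  obtain d A b T t where Qd: "Q = {x. \<exists>y::nat \<Rightarrow> real.
                  (\<forall>i<\<sigma>. (\<Sum>j<d. A i j * y j) \<ge> b i) \<and>
                  (\<forall>k. x$k = (\<Sum>j<d. T k j * y j) + t$k)}"
    using ef unfolding ext_form_def by blast
  define Y where "Y = {y. \<forall>i<\<sigma>. b i \<le> lf d (A i) y}"
  define Tm where "Tm y = (\<chi> k. lf d (T k) y + t$k)" for y
  have Q: "Q = Tm ` Y" unfolding Qd Y_def Tm_def lf_def by (auto simp: vec_eq_iff)
  have rec: "lf d (T k) r = 0" if r: "\<forall>i<\<sigma>. 0 \<le> lf d (A i) r" and y0: "y0 \<in> Y" for r y0 k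
  proof -
    have "\<forall>s\<ge>0. 0 \<le> lf d (T k) y0 + t$k + s * lf d (T k) r \<and> lf d (T k) y0 + t$k + s * lf d (T k) r \<le> 1"
    proof (intro allI impI)
      fix s :: real assume s: "0 \<le> s"
      have "\<forall>i<\<sigma>. b i \<le> lf d (A i) (\<lambda>j. y0 j + s * r j)"
      proof (intro allI impI)
        fix i assume i: "i < \<sigma>"
        have "b i \<le> lf d (A i) y0" "0 \<le> s * lf d (A i) r" using y0 r s i unfolding Y_def by auto
        then show "b i \<le> lf d (A i) (\<lambda>j. y0 j + s * r j)" by (simp add: lf_lin)
      qed
      then have "(\<lambda>j. y0 j + s * r j) \<in> Y" unfolding Y_def by simp
      then have "Tm (\<lambda>j. y0 j + s * r j) \<in> unit_cube" using cube Q by auto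
      then show "0 \<le> lf d (T k) y0 + t$k + s * lf d (T k) r \<and> lf d (T k) y0 + t$k + s * lf d (T k) r \<le> 1"
        unfolding unit_cube_def Tm_def lf_lin by (auto simp: algebra_simps)
    qed
    then show ?thesis using bounded_ray by blast
  qed
  define A' where "A' i = ext d (A i) (- b i)" for i
  define X where "X k = ext d (T k) (t$k)" for k
  define L where "L = ext d (\<lambda>j. 0) 1"
  have lA: "lf (Suc d) (A' i) y = lf d (A i) y - b i * y d" for i y unfolding A'_def lf_ext by simp
  have lX: "lf (Suc d) (X k) y = lf d (T k) y + t$k * y d" for k y unfolding X_def lf_ext by simp
  have lL: "lf (Suc d) L y = y d" for y using lf_ext[of d "\<lambda>j. 0" 1 y] unfolding L_def by (simp add: lf_zero)
  have "cone_of Q = hmap (Suc d) X L ` hsol \<sigma> (Suc d) A' {}"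
  proof
    show "cone_of Q \<subseteq> hmap (Suc d) X L ` hsol \<sigma> (Suc d) A' {}"
    proof
      fix p assume p: "p \<in> cone_of Q"
      obtain Z l where pZ: "p = (Z, l)" by force
      show "p \<in> hmap (Suc d) X L ` hsol \<sigma> (Suc d) A' {}"
      proof (cases "l = 0 \<and> Z = 0")
        case True
        have "(\<lambda>j. 0) \<in> hsol \<sigma> (Suc d) A' {}" unfolding hsol_def lA by (simp add: lf_zero_y)
        moreover have "hmap (Suc d) X L (\<lambda>j. 0) = p" unfolding hmap_def pZ using True
          by (simp add: lf_zero_y vec_eq_iff)
        ultimately show ?thesis by (metis image_eqI)
      next
        case False
        then have l: "0 < l" and x: "(1/l) *\<^sub>R Z \<in> Q" using p unfolding pZ cone_of_def by auto
        then obtain y0 where y0: "y0 \<in> Y" and xy: "(1/l) *\<^sub>R Z = Tm y0" unfolding Q by blast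
        define y where "y = (\<lambda>j. if j = d then l else l * y0 j)"
        have ly: "lf d a y = l * lf d a y0" for a
          unfolding y_def lf_mul[symmetric] by (rule lf_cong) auto
        have yd: "y d = l" unfolding y_def by simp
        have "\<forall>i<\<sigma>. 0 \<le> lf d (A i) y - b i * y d"
        proof (intro allI impI)
          fix i assume i: "i < \<sigma>"
          have "b i \<le> lf d (A i) y0" using y0 i unfolding Y_def by auto
          from mult_left_mono[OF this, of l] l
          show "0 \<le> lf d (A i) y - b i * y d" using ly[of "A i"] yd by (simp add: algebra_simps)
        qed
        then have "y \<in> hsol \<sigma> (Suc d) A' {}" unfolding hsol_def lA by simp
        moreover have "hmap (Suc d) X L y = p"
        proof -
          have "Z $ k = l * (lf d (T k) y0 + t$k)" for k
            using arg_cong[OF xy, of "\<lambda>v. v $ k"] l unfolding Tm_def by (simp add: field_simps)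
          then show ?thesis unfolding hmap_def pZ lX lL ly yd by (simp add: vec_eq_iff algebra_simps)
        qed
        ultimately show ?thesis by (metis image_eqI)
      qed
    qed
  next
    show "hmap (Suc d) X L ` hsol \<sigma> (Suc d) A' {} \<subseteq> cone_of Q"
    proof
      fix p assume "p \<in> hmap (Suc d) X L ` hsol \<sigma> (Suc d) A' {}"
      then obtain y where y: "\<forall>i<\<sigma>. 0 \<le> lf d (A i) y - b i * y d" and p: "p = hmap (Suc d) X L y"
        unfolding hsol_def lA by auto
      have pp: "p = ((\<chi> k. lf d (T k) y + t$k * y d), y d)" unfolding p hmap_def lX lL ..
      obtain y1 where y1: "y1 \<in> Y" "q1 = Tm y1" using q(1) unfolding Q by blast
      obtain y2 where y2: "y2 \<in> Y" "q2 = Tm y2" using q(2) unfolding Q by blast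
      consider "y d > 0" | "y d = 0" | "y d < 0" by linarith
      then show "p \<in> cone_of Q"
      proof cases
        case 1
        define z where "z = (\<lambda>j. y j / y d)"
        have lz: "lf d a z = lf d a y / y d" for a unfolding z_def by (rule lf_div)
        have "\<forall>i<\<sigma>. b i \<le> lf d (A i) z"
        proof (intro allI impI)
          fix i assume i: "i < \<sigma>"
          have "b i * y d \<le> lf d (A i) y" using y[rule_format, OF i] by simp
          then show "b i \<le> lf d (A i) z" unfolding lz using 1 by (simp add: pos_le_divide_eq)
        qed
        then have "z \<in> Y" unfolding Y_def by simp
        moreover have "(1 / y d) *\<^sub>R (\<chi> k. lf d (T k) y + t$k * y d) = Tm z"
          unfolding Tm_def lz using 1 by (simp add: vec_eq_iff field_simps)
        ultimately show ?thesis unfolding pp cone_of_def using 1 Q by auto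
      next
        case 2
        have "\<forall>i<\<sigma>. 0 \<le> lf d (A i) y" using y 2 by simp
        then have "lf d (T k) y = 0" for k using rec y1(1) by blast
        then show ?thesis unfolding pp cone_of_def using 2 by (simp add: vec_eq_iff)
      next
        case 3
        define \<mu> where "\<mu> = - y d"
        have mu: "0 < \<mu>" using 3 unfolding \<mu>_def by simp
        have same: "lf d (T k) y0 = - lf d (T k) y / \<mu>" if y0: "y0 \<in> Y" for y0 k
        proof -
          have "\<forall>i<\<sigma>. 0 \<le> lf d (A i) (\<lambda>j. y0 j + (1/\<mu>) * y j)"
          proof (intro allI impI)
            fix i assume i: "i < \<sigma>"
            have "b i \<le> lf d (A i) y0" using y0 i unfolding Y_def by auto
            moreover have "- b i * \<mu> \<le> lf d (A i) y" using y[rule_format, OF i] unfolding \<mu>_def by simp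
            then have "- b i \<le> lf d (A i) y / \<mu>" using mu by (simp add: field_simps)
            ultimately show "0 \<le> lf d (A i) (\<lambda>j. y0 j + (1/\<mu>) * y j)" unfolding lf_lin by simp
          qed
          then have "lf d (T k) (\<lambda>j. y0 j + (1/\<mu>) * y j) = 0" using rec y0 by blast
          then show ?thesis unfolding lf_lin by (simp add: field_simps)
        qed
        have "q1 = q2" unfolding y1(2) y2(2) Tm_def using same[OF y1(1)] same[OF y2(1)] by simp
        then show ?thesis using q(3) by simp
      qed
    qed
  qed
  then show ?thesis unfolding hform_def by (intro exI conjI) auto
qed



lemma cone_rf:
  fixes Q :: "(real^'n::finite) set"
  assumes cQ: "convex Q" and h: "hform (cone_of Q) \<sigma>"
  shows "hform (cone_of (rf_apply \<psi> Q)) (rf_size \<psi> * \<sigma>)"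
proof (induction \<psi>)
  case (Var i)
  then show ?case using hform_eq[OF h, of i 1] cone_lit[of Q i 1] by simp
next
  case (NegVar i)
  then show ?case using hform_eq[OF h, of i 0] cone_lit[of Q i 0] by simp
next
  case (Conj f g)
  then show ?case using hform_int[OF Conj.IH] by (simp add: cone_int add_mult_distrib)
next
  case (Disj f g)
  have cv: "convex (rf_apply f Q)" "convex (rf_apply g Q)" using rf_apply_sub_convex[OF cQ] by auto
  show ?case using hform_msum[OF Disj.IH] by (simp add: cone_disj[OF cv] add_mult_distrib)
qed

lemma rf_size_pos: "1 \<le> rf_size \<psi>"
  by (induction \<psi>) auto

lemma ext_empty:
  assumes "1 \<le> m"
  shows "ext_form ({}::(real^'n::finite) set) m"
proof -
  have nf: "\<not> (\<forall>i<m. (1::real) \<le> 0)" using assms by (metis less_numeral_extra(1) not_one_le_zero less_le_trans nat_less_le)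
  show ?thesis unfolding ext_form_def
    apply (rule exI[of _ 0], rule exI[of _ "\<lambda>i j. 0"], rule exI[of _ "\<lambda>i. 1"], rule exI[of _ "\<lambda>k j. 0"],
      rule exI[of _ 0])
    using nf by auto
qed

lemma ext_single: "ext_form {q::real^'n::finite} m"
  unfolding ext_form_def
  by (rule exI[of _ 0], rule exI[of _ "\<lambda>i j. 0"], rule exI[of _ "\<lambda>i. 0"], rule exI[of _ "\<lambda>k j. 0"],
      rule exI[of _ q]) (auto simp: vec_eq_iff)

lemma part2_ext:
  fixes \<phi> :: "'n::finite rformula" and Q :: "(real^'n) set"
  assumes cQ: "convex Q" and cube: "Q \<subseteq> unit_cube" and ef: "ext_form Q \<sigma>" and s1: "1 \<le> \<sigma>"
  shows "ext_form (rf_apply \<phi> Q) (rf_size \<phi> * \<sigma>)"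
proof -
  have m: "1 \<le> rf_size \<phi> * \<sigma>" using rf_size_pos[of \<phi>] s1 by simp
  show ?thesis
  proof (cases "\<exists>q1\<in>Q. \<exists>q2\<in>Q. q1 \<noteq> q2")
    case True
    then obtain q1 q2 where q: "q1 \<in> Q" "q2 \<in> Q" "q1 \<noteq> q2" by blast
    have "hform (cone_of Q) \<sigma>" by (rule leaf_cone[OF ef cube q])
    then have "hform (cone_of (rf_apply \<phi> Q)) (rf_size \<phi> * \<sigma>)" by (rule cone_rf[OF cQ])
    from hform_ext[OF this m] show ?thesis unfolding cone_root .
  next
    case False
    have sub: "rf_apply \<phi> Q \<subseteq> Q" using rf_apply_sub_convex[OF cQ] by blast
    show ?thesis
    proof (cases "rf_apply \<phi> Q = {}")
      case True then show ?thesis using ext_empty[OF m] by simp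
    next
      case ne: False
      then obtain q where q: "q \<in> rf_apply \<phi> Q" by blast
      then have "rf_apply \<phi> Q = {q}" using sub False by blast
      then show ?thesis using ext_single by simp
    qed
  qed
qed

lemma polytope_rf:
  fixes Q :: "(real^'n::finite) set"
  assumes "polytope Q"
  shows "polytope (rf_apply \<psi> Q)"
proof (induction \<psi>)
  case (Var i)
  have "{x\<in>Q. x$i = 1} = Q \<inter> {x. axis i 1 \<bullet> x = 1}" by (auto simp: inner_axis')
  then show ?case using polytope_Int_polyhedron[OF assms polyhedron_hyperplane] by simp
next
  case (NegVar i)
  have "{x\<in>Q. x$i = 0} = Q \<inter> {x. axis i 1 \<bullet> x = 0}" by (auto simp: inner_axis')
  then show ?case using polytope_Int_polyhedron[OF assms polyhedron_hyperplane] by simp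
next
  case (Conj f g)
  then show ?case by (simp add: polytope_Int)
next
  case (Disj f g)
  obtain V W where V: "finite V" "rf_apply f Q = convex hull V" and W: "finite W" "rf_apply g Q = convex hull W"
    using Disj.IH unfolding polytope_def by blast
  have "convex hull (rf_apply f Q \<union> rf_apply g Q) = convex hull (V \<union> W)"
    unfolding V W by (rule hull_Un[symmetric]) (simp add: convex_Inter)
  then show ?case using V W by (simp add: polytope_convex_hull)
qed

theorem theorem4p4:
  fixes \<phi> :: "'n::finite rformula" and Q :: "(real^'n) set" and \<nu> \<sigma> :: nat
  assumes "convex Q" and "Q \<subseteq> unit_cube" and "defined_set \<phi> \<subseteq> Q"
  shows "(sat_valid_notch (defined_set \<phi>) \<nu> Q
            \<longrightarrow> sat_valid_notch (defined_set \<phi>) (\<nu> + 1) (rf_apply \<phi> Q))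
       \<and> (polytope Q \<and> ext_form Q \<sigma> \<and> 1 \<le> \<sigma>
            \<longrightarrow> polytope (rf_apply \<phi> Q) \<and> ext_form (rf_apply \<phi> Q) (rf_size \<phi> * \<sigma>))"
  using part1[OF assms(1,2)] polytope_rf part2_ext[OF assms(1,2)] by blast


end
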